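(* Let $M$ be a regular singular difference module over $K$. Write $M=K\otimes_{\mathbb C}V$, where $V$ is a finite-dimensional $\mathbb C$-vector space with $A\in \mathrm{GL}(V)$ all of whose eigenvalues $\alpha$ satisfy $|q|<|\alpha|\le 1$, and $\Phi(a\otimes v)=\phi(a)\otimes A(v)$ for $a\in K$, $v\in V$ (such a presentation exists). Let $M_{global}\subset M$ be the set of $m\in M$ such that the $\mathbb C$-vector space spanned by $\{\Phi^n m\mid n\ge 0\}$ is finite-dimensional. Then $M_{global}=\mathbb C[z,z^{-1}]\otimes_{\mathbb C}V$, and consequently the natural map $K\otimes_{\mathbb C[z,z^{-1}]}M_{global}\to M$ is an isomorphism.
   Context: Fix $q\in\mathbb C$ with $0<|q|<1$. A difference ring is a commutative ring $R$ with an automorphism $\phi$; a difference module over $R$ is a free $R$-module $M$ of finite rank with an additive bijection $\Phi:M\to M$ satisfying $\Phi(rm)=\phi(r)\Phi(m)$. $K=\mathbb C(\{z\})$ denotes the field of convergent Laurent series (germs at $0$ of meromorphic functions), with $\phi(f)(z)=f(qz)$; $\mathbb C[z,z^{-1}]$ is a difference subring. A difference module $M$ over $K$ is regular singular if there is a $K$-basis $e_1,\dots,e_m$ of $M$ such that the lattice $\mathbb C\{z\}e_1\oplus\cdots\oplus\mathbb C\{z\}e_m$ is mapped onto itself by $\Phi$ and $\Phi^{-1}$ (here $\mathbb C\{z\}$ is the ring of convergent power series). *)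

theory Defs
  imports "HOL-Analysis.Analysis" "HOL-Computational_Algebra.Formal_Laurent_Series"
begin

text \<open>The field K of convergent Laurent series is modelled as the formal Laurent
series (finitely many negative-degree terms) whose regular part has positive
radius of convergence.\<close>

definition fls_convergent :: "complex fls \<Rightarrow> bool" where
  "fls_convergent f \<longleftrightarrow> fps_conv_radius (fls_regpart f) > 0"

text \<open>The difference automorphism phi: f(z) maps to f(qz), i.e. the n-th coefficient
is multiplied by q to the power n.\<close>

lift_definition fls_qdil :: "complex \<Rightarrow> complex fls \<Rightarrow> complex fls"
  is "\<lambda>q f n. q powi n * f n"
  by (auto elim: eventually_mono)

text \<open>Laurent polynomials: the subring C[z,z^-1] (only finitely many nonzero coefficients).\<close>

definition fls_laurent_poly :: "complex fls \<Rightarrow> bool" where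
  "fls_laurent_poly f \<longleftrightarrow> (\<exists>N::int. \<forall>n\<ge>N. fls_nth f n = 0)"

text \<open>The module M = K tensor V with V = C^n: elements are vectors of Laurent series;
Phi(a tensor v) = phi(a) tensor A v, written in coordinates.\<close>

definition dmod_Phi :: "complex \<Rightarrow> complex^'n^'n \<Rightarrow> complex fls^'n \<Rightarrow> complex fls^'n" where
  "dmod_Phi q A m = (\<chi> i. \<Sum>j\<in>UNIV. fls_const (A $ i $ j) * fls_qdil q (m $ j))"

text \<open>Complex scalar multiplication on M and the complex span of a set of elements of M.\<close>

definition cscale :: "complex \<Rightarrow> complex fls^'n \<Rightarrow> complex fls^'n" where
  "cscale c m = (\<chi> i. fls_const c * m $ i)"

definition cspan :: "(complex fls^'n) set \<Rightarrow> (complex fls^'n) set" where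
  "cspan S = {x. \<exists>T c. finite T \<and> T \<subseteq> S \<and> x = (\<Sum>s\<in>T. cscale (c s) s)}"

text \<open>M_global: elements whose forward Phi-orbit spans a finite-dimensional C-space.\<close>

definition M_global :: "complex \<Rightarrow> complex^'n^'n \<Rightarrow> (complex fls^'n) set" where
  "M_global q A = {m. (\<forall>i. fls_convergent (m $ i)) \<and>
     (\<exists>S. finite S \<and> (\<forall>k::nat. (dmod_Phi q A ^^ k) m \<in> cspan S))}"

end

theory Submission imports Defs begin

lemma norm_smult_vec: "norm ((c::complex) *s (x::complex^'n)) = norm c * norm x"
  unfolding norm_vec_def by (simp add: norm_mult L2_set_right_distrib)

lemma vs_cscale: "vector_space (cscale :: complex \<Rightarrow> complex fls^'n \<Rightarrow> complex fls^'n)"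
  by unfold_locales
    (auto simp: cscale_def vec_eq_iff distrib_left fls_plus_const[symmetric] distrib_right
      mult.assoc[symmetric])

interpretation cs: vector_space "cscale :: complex \<Rightarrow> complex fls^'n \<Rightarrow> complex fls^'n"
  by (rule vs_cscale)

lemma cspan_span: "cspan S = cs.span S"
  unfolding cspan_def cs.span_explicit by blast

definition cv :: "complex fls^'n \<Rightarrow> int \<Rightarrow> complex^'n" where
  "cv m n = (\<chi> j. fls_nth (m$j) n)"

lemma cv_add: "cv (a + b) n = cv a n + cv b n"
  by (simp add: cv_def vec_eq_iff)
lemma cv_zero: "cv 0 n = 0"
  by (simp add: cv_def vec_eq_iff)
lemma cv_cscale: "cv (cscale c m) n = c *s cv m n"
  by (simp add: cv_def cscale_def vec_eq_iff)
lemma cv_sum: "cv (sum f A) n = (\<Sum>x\<in>A. cv (f x) n)"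
  by (induction A rule: infinite_finite_induct) (auto simp: cv_add cv_zero)

lemma cv_Phi: "cv (dmod_Phi q A m) n = (q powi n) *s (A *v cv m n)"
  by (simp add: cv_def dmod_Phi_def vec_eq_iff matrix_vector_mult_def fls_nth_sum
      fls_qdil.rep_eq sum_distrib_left mult_ac)

lemma cv_Phi_pow: "cv ((dmod_Phi q A ^^ k) m) n = ((q powi n)^k) *s (((*v) A ^^ k) (cv m n))"
proof (induction k)
  case (Suc k)
  have "cv ((dmod_Phi q A ^^ Suc k) m) n = (q powi n) *s (A *v cv ((dmod_Phi q A ^^ k) m) n)"
    by (simp add: cv_Phi)
  also have "\<dots> = (q powi n) *s (A *v (((q powi n)^k) *s (((*v) A ^^ k) (cv m n))))"
    using Suc.IH by simp
  also have "\<dots> = ((q powi n)^Suc k) *s (((*v) A ^^ Suc k) (cv m n))"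
    by (simp add: vector_scalar_commute vec_eq_iff mult_ac)
  finally show ?case .
qed simp


lemma inj_pow_zero:
  fixes A :: "complex^'n^'n"
  assumes "invertible A" "((*v) A ^^ j) x = 0"
  shows "x = 0"
  using assms(2)
proof (induction j arbitrary: x)
  case (Suc j)
  have inj: "inj ((*v) A)"
    using assms(1) unfolding invertible_def
    using matrix_left_invertible_injective by blast
  have "A *v (((*v) A ^^ j) x) = 0"
    using Suc.prems by simp
  then have "((*v) A ^^ j) x = 0" using inj by (metis injD matrix_vector_mult_0_right)
  then show ?case using Suc.IH by blast
qed simp

lemma pow_bound:
  fixes A :: "complex^'n^'n"
  assumes K: "K \<ge> 1" "\<And>x. norm (A *v x) \<le> K * norm x"
  shows "norm (((*v) A ^^ j) x) \<le> K^j * norm x"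
proof (induction j)
  case (Suc j)
  have "norm (((*v) A ^^ Suc j) x) = norm (A *v (((*v) A ^^ j) x))" by simp
  also have "\<dots> \<le> K * norm (((*v) A ^^ j) x)" by (rule K(2))
  also have "\<dots> \<le> K * (K^j * norm x)" using Suc.IH K(1) by (simp add: mult_left_mono)
  finally show ?case by simp
qed simp

lemma key0:
  fixes A :: "complex^'n^'n" and v :: "nat \<Rightarrow> complex^'n" and lam :: "nat \<Rightarrow> complex"
  assumes inv: "invertible A" and q: "q \<noteq> 0" "norm q < 1"
    and k0: "k0 \<le> d" "lam k0 \<noteq> 0" "\<And>k. k < k0 \<Longrightarrow> lam k = 0"
    and rel: "\<And>n. (\<Sum>k\<le>d. (lam k * (q^n)^k) *s (((*v) A ^^ k) (v n))) = 0"
  shows "\<exists>N. \<forall>n\<ge>N. v n = 0"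
proof -
  obtain K0 where K0: "\<And>x. norm (A *v x) \<le> norm x * K0"
    using bounded_linear.bounded[OF matrix_vector_mul_bounded_linear[of A]] by blast
  define K where "K = max 1 K0"
  have K1: "K \<ge> 1" by (simp add: K_def)
  have KA: "norm (A *v x) \<le> K * norm x" for x
    using K0[of x] by (smt (verit, best) K_def max.cobounded2 mult.commute mult_left_mono norm_ge_zero)
  have powb: "norm (((*v) A ^^ j) x) \<le> K^d * norm x" if "j \<le> d" for j x
  proof -
    have "norm (((*v) A ^^ j) x) \<le> K^j * norm x" by (rule pow_bound[OF K1 KA])
    also have "\<dots> \<le> K^d * norm x"
      by (intro mult_right_mono power_increasing that K1) simp
    finally show ?thesis .
  qed
  define L where "L = (\<Sum>k\<le>d. norm (lam k))"
  define C where "C = K^d * L"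
  have lpos: "norm (lam k0) > 0" using k0 by simp
  have "(\<lambda>n. norm q ^ n * C) \<longlonglongrightarrow> 0"
    by (intro tendsto_mult_left_zero LIMSEQ_power_zero) (use q in simp)
  then have "eventually (\<lambda>n. norm q ^ n * C < norm (lam k0)) sequentially"
    using lpos by (rule order_tendstoD(2))
  then obtain N where N: "\<And>n. n \<ge> N \<Longrightarrow> norm q ^ n * C < norm (lam k0)"
    unfolding eventually_sequentially by blast
  have "v n = 0" if "n \<ge> N" for n
  proof -
    define r where "r = q^n"
    define y where "y = ((*v) A ^^ k0) (v n)"
    have shift: "((*v) A ^^ k) (v n) = ((*v) A ^^ (k - k0)) y" if "k \<ge> k0" for k
    proof -
      have "k = (k - k0) + k0" using that by simp
      then have "((*v) A ^^ k) = ((*v) A ^^ (k - k0)) \<circ> ((*v) A ^^ k0)"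
        by (metis funpow_add)
      then show ?thesis by (simp add: y_def)
    qed
    have split: "{..d} = {..<k0} \<union> insert k0 {k0<..d}" using k0(1) by auto
    have "(\<Sum>k\<le>d. (lam k * r^k) *s (((*v) A ^^ k) (v n))) = 0" using rel[of n] by (simp add: r_def)
    then have "(\<Sum>k\<in>{..<k0}. (lam k * r^k) *s (((*v) A ^^ k) (v n)))
        + ((lam k0 * r^k0) *s y + (\<Sum>k\<in>{k0<..d}. (lam k * r^k) *s (((*v) A ^^ k) (v n)))) = 0"
    proof -
      let ?f = "\<lambda>k. (lam k * r^k) *s (((*v) A ^^ k) (v n))"
      have "sum ?f ({..<k0} \<union> insert k0 {k0<..d}) = sum ?f {..<k0} + sum ?f (insert k0 {k0<..d})"
        by (rule sum.union_disjoint) auto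
      also have "sum ?f (insert k0 {k0<..d}) = ?f k0 + sum ?f {k0<..d}"
        by (rule sum.insert) auto
      finally show ?thesis using \<open>sum ?f {..d} = 0\<close> unfolding split by (simp add: y_def add_ac)
    qed
    moreover have "(\<Sum>k\<in>{..<k0}. (lam k * r^k) *s (((*v) A ^^ k) (v n))) = 0"
      using k0(3) by (intro sum.neutral) auto
    moreover have "(\<Sum>k\<in>{k0<..d}. (lam k * r^k) *s (((*v) A ^^ k) (v n)))
        = (\<Sum>k\<in>{k0<..d}. (lam k * r^k) *s (((*v) A ^^ (k - k0)) y))"
      using shift by (intro sum.cong) auto
    ultimately have eq: "(lam k0 * r^k0) *s y = - (\<Sum>k\<in>{k0<..d}. (lam k * r^k) *s (((*v) A ^^ (k - k0)) y))"
      by (simp add: eq_neg_iff_add_eq_0)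
    have nr: "norm r = norm q ^ n" by (simp add: r_def norm_power)
    have nr1: "norm r \<le> 1" using q by (simp add: nr power_le_one)
    have "norm (lam k0) * norm r ^ k0 * norm y = norm ((lam k0 * r^k0) *s y)"
      by (simp add: norm_smult_vec norm_mult norm_power)
    also have "\<dots> = norm (\<Sum>k\<in>{k0<..d}. (lam k * r^k) *s (((*v) A ^^ (k - k0)) y))"
      by (simp add: eq)
    also have "\<dots> \<le> (\<Sum>k\<in>{k0<..d}. norm ((lam k * r^k) *s (((*v) A ^^ (k - k0)) y)))"
      by (rule norm_sum)
    also have "\<dots> \<le> (\<Sum>k\<in>{k0<..d}. norm (lam k) * (norm r ^ k0 * norm q ^ n) * (K^d * norm y))"
    proof (intro sum_mono)
      fix k assume k: "k \<in> {k0<..d}"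
      have "norm r ^ k \<le> norm r ^ (Suc k0)"
        using k nr1 by (intro power_decreasing) auto
      also have "\<dots> = norm r ^ k0 * norm q ^ n" by (simp add: nr)
      finally have a: "norm r ^ k \<le> norm r ^ k0 * norm q ^ n" .
      have b: "norm (((*v) A ^^ (k - k0)) y) \<le> K^d * norm y"
        using k by (intro powb) auto
      show "norm ((lam k * r^k) *s (((*v) A ^^ (k - k0)) y)) \<le> norm (lam k) * (norm r ^ k0 * norm q ^ n) * (K^d * norm y)"
      proof -
        have "norm r ^ k * norm (((*v) A ^^ (k - k0)) y) \<le> (norm r ^ k0 * norm q ^ n) * (K^d * norm y)"
          using K1 by (intro mult_mono a b) (auto intro!: mult_nonneg_nonneg)
        then have "norm (lam k) * (norm r ^ k * norm (((*v) A ^^ (k - k0)) y)) \<le> norm (lam k) * ((norm r ^ k0 * norm q ^ n) * (K^d * norm y))"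
          by (intro mult_left_mono) auto
        then show ?thesis by (simp add: norm_smult_vec norm_mult norm_power mult.assoc)
      qed
    qed
    also have "\<dots> = (\<Sum>k\<in>{k0<..d}. norm (lam k)) * (norm r ^ k0 * norm q ^ n) * (K^d * norm y)"
      by (simp add: sum_distrib_right)
    also have "\<dots> \<le> L * (norm r ^ k0 * norm q ^ n) * (K^d * norm y)"
      unfolding L_def using K1 by (intro mult_right_mono sum_mono2) auto
    finally have ineq: "norm (lam k0) * norm r ^ k0 * norm y \<le> L * (norm r ^ k0 * norm q ^ n) * (K^d * norm y)" .
    have rpos: "norm r ^ k0 > 0" using q by (simp add: nr)
    have ineq2: "norm (lam k0) * norm y \<le> (norm q ^ n * C) * norm y"
    proof -
      have "norm r ^ k0 * (norm (lam k0) * norm y) \<le> norm r ^ k0 * ((norm q ^ n * C) * norm y)"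
        using ineq by (simp add: C_def mult_ac)
      then show ?thesis using rpos by simp
    qed
    have "norm y = 0"
    proof (rule ccontr)
      assume "norm y \<noteq> 0"
      then have "norm y > 0" by simp
      then have "(norm q ^ n * C) * norm y < norm (lam k0) * norm y"
        using N[OF that] by simp
      then show False using ineq2 by simp
    qed
    then have "y = 0" by simp
    then show "v n = 0" using inj_pow_zero[OF inv] by (simp add: y_def)
  qed
  then show ?thesis by blast
qed

lemma key:
  fixes A :: "complex^'n^'n" and v :: "nat \<Rightarrow> complex^'n" and lam :: "nat \<Rightarrow> complex"
  assumes inv: "invertible A" and q: "q \<noteq> 0" "norm q < 1"
    and k0: "k0 \<le> d" "lam k0 \<noteq> 0"
    and rel: "\<And>n. (\<Sum>k\<le>d. (lam k * (q^n)^k) *s (((*v) A ^^ k) (v n))) = 0"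
  shows "\<exists>N. \<forall>n\<ge>N. v n = 0"
proof -
  define k1 where "k1 = (LEAST k. lam k \<noteq> 0)"
  have "lam k1 \<noteq> 0" unfolding k1_def by (rule LeastI[of _ k0]) (rule k0(2))
  moreover have "k1 \<le> k0" unfolding k1_def by (rule Least_le) (rule k0(2))
  moreover have "lam k = 0" if "k < k1" for k using not_less_Least[of k] that k1_def by blast
  ultimately show ?thesis using key0[OF inv q, of k1 d lam v] k0(1) rel by auto
qed


lemma dep:
  fixes f :: "complex fls^'n \<Rightarrow> complex fls^'n"
  assumes S: "finite S" and sp: "\<And>k. (f^^k) m \<in> cs.span S"
  shows "\<exists>lam::nat\<Rightarrow>complex. \<exists>k0\<le>card S. lam k0 \<noteq> 0 \<and>
           (\<Sum>k\<le>card S. cscale (lam k) ((f^^k) m)) = 0"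
proof -
  define d where "d = card S"
  define x where "x = (\<lambda>k. (f^^k) m)"
  show ?thesis
  proof (cases "inj_on x {..d}")
    case True
    define Orb where "Orb = x ` {..d}"
    have cOrb: "card Orb = Suc d" using True by (simp add: Orb_def card_image)
    have "Orb \<subseteq> cs.span S" using sp by (auto simp: Orb_def x_def)
    then have "cs.dependent Orb"
      using cs.independent_span_bound[OF S, of Orb] cOrb by (auto simp: d_def)
    then obtain t u where t: "finite t" "t \<subseteq> Orb" "(\<Sum>v\<in>t. cscale (u v) v) = 0"
        and v: "\<exists>v\<in>t. u v \<noteq> 0"
      unfolding cs.dependent_explicit by blast
    define t' where "t' = {k\<in>{..d}. x k \<in> t}"
    define lam where "lam = (\<lambda>k. if k \<in> t' then u (x k) else 0)"
    have img: "x ` t' = t" using t(2) by (auto simp: t'_def Orb_def)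
    have inj': "inj_on x t'" using True by (rule inj_on_subset) (auto simp: t'_def)
    have "(\<Sum>k\<le>d. cscale (lam k) (x k)) = (\<Sum>k\<in>{..d}. if k \<in> t' then cscale (u (x k)) (x k) else 0)"
      by (intro sum.cong) (auto simp: lam_def)
    also have "\<dots> = (\<Sum>k\<in>{..d} \<inter> t'. cscale (u (x k)) (x k))"
      by (rule sum.inter_restrict[symmetric]) simp
    also have "{..d} \<inter> t' = t'" by (auto simp: t'_def)
    also have "(\<Sum>k\<in>t'. cscale (u (x k)) (x k)) = (\<Sum>v\<in>x ` t'. cscale (u v) v)"
      by (rule sum.reindex[OF inj', symmetric, unfolded comp_def])
    also have "\<dots> = 0" using img t(3) by simp
    finally have rel: "(\<Sum>k\<le>d. cscale (lam k) (x k)) = 0" .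
    from v obtain w where w: "w \<in> t" "u w \<noteq> 0" by blast
    then obtain k0 where k0: "k0 \<in> t'" "x k0 = w" using img by blast
    have "k0 \<le> d" "lam k0 \<noteq> 0" using k0 w by (auto simp: t'_def lam_def)
    then show ?thesis using rel by (auto simp: d_def x_def)
  next
    case False
    then obtain i j where ij: "i \<le> d" "j \<le> d" "i \<noteq> j" "x i = x j"
      unfolding inj_on_def by auto
    define lam where "lam = (\<lambda>k. if k = i then 1 else if k = j then -1 else (0::complex))"
    have "(\<Sum>k\<le>d. cscale (lam k) (x k)) =
        (\<Sum>k\<le>d. (if k = i then x i else 0) + (if k = j then - x j else 0))"
      using ij(3) by (intro sum.cong) (auto simp: lam_def)
    also have "\<dots> = 0" using ij by (simp add: sum.distrib)
    finally show ?thesis using ij by (intro exI[of _ lam] exI[of _ i]) (auto simp: lam_def d_def x_def)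
  qed
qed


lemma pow_zero_vec: "((*v) (A::complex^'n^'n) ^^ k) 0 = 0"
  by (induction k) simp_all

lemma span_of_support:
  fixes m' :: "complex fls^'n"
  assumes "\<And>n. n \<notin> {L..<N} \<Longrightarrow> cv m' n = 0"
  shows "m' \<in> cs.span ((\<lambda>(j,n). (\<chi> i. if i = j then fls_shift (-n) 1 else 0) :: complex fls^'n) ` (UNIV \<times> {L..<N}))"
    (is "_ \<in> cs.span (?e ` ?I)")
proof -
  have eq: "m' = (\<Sum>j\<in>UNIV. \<Sum>n\<in>{L..<N}. cscale (fls_nth (m'$j) n) (?e (j,n)))"
  proof (subst vec_eq_iff, intro allI fls_eqI)
    fix i t
    have "fls_nth ((\<Sum>j\<in>UNIV. \<Sum>n\<in>{L..<N}. cscale (fls_nth (m'$j) n) (?e (j,n))) $ i) t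
        = (\<Sum>j\<in>UNIV. \<Sum>n\<in>{L..<N}. (if i = j \<and> t = n then fls_nth (m'$j) n else 0))"
      unfolding sum_component fls_nth_sum
      by (intro sum.cong refl) (auto simp: cscale_def)
    also have "\<dots> = (\<Sum>j\<in>UNIV. if j = i then (\<Sum>n\<in>{L..<N}. if t = n then fls_nth (m'$i) n else 0) else 0)"
      by (intro sum.cong refl) auto
    also have "\<dots> = (if t \<in> {L..<N} then fls_nth (m'$i) t else 0)"
      by (simp add: sum.delta')
    also have "\<dots> = fls_nth (m'$i) t"
      using assms[of t] by (auto simp: cv_def vec_eq_iff)
    finally show "fls_nth (m' $ i) t = fls_nth ((\<Sum>j\<in>UNIV. \<Sum>n\<in>{L..<N}. cscale (fls_nth (m'$j) n) (?e (j,n))) $ i) t"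
      by simp
  qed
  have "(\<Sum>j\<in>UNIV. \<Sum>n\<in>{L..<N}. cscale (fls_nth (m'$j) n) (?e (j,n))) \<in> cs.span (?e ` ?I)"
    by (intro cs.span_sum cs.span_scale cs.span_base) auto
  then show ?thesis using eq by simp
qed

theorem lemma1p1:
  fixes q :: complex and A :: "complex^'n^'n"
  assumes "0 < norm q" "norm q < 1"
    and "invertible A"
    and "\<And>\<alpha> v. v \<noteq> 0 \<Longrightarrow> A *v v = \<alpha> *s v \<Longrightarrow> norm q < norm \<alpha> \<and> norm \<alpha> \<le> 1"
  shows "M_global q A = {m. \<forall>i. fls_laurent_poly (m $ i)}
    \<and> (\<forall>j. (\<chi> i. if i = j then 1 else 0) \<in> M_global q A)
    \<and> (\<forall>m::complex fls^'n. (\<forall>i. fls_convergent (m $ i)) \<longrightarrow>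
          (\<exists>!c. (\<forall>j. fls_convergent (c j)) \<and>
               m = (\<Sum>j\<in>UNIV. (\<chi> i. c j * (if i = j then 1 else 0)))))"
proof -
  have q0: "q \<noteq> 0" using assms(1) by auto
  define LP where "LP = {m::complex fls^'n. \<forall>i. fls_laurent_poly (m $ i)}"
  have sub: "M_global q A \<subseteq> LP"
  proof
    fix m assume "m \<in> M_global q A"
    then obtain S where S: "finite S" "\<And>k. (dmod_Phi q A ^^ k) m \<in> cspan S"
      unfolding M_global_def by blast
    obtain lam k0 where k0: "k0 \<le> card S" "lam k0 \<noteq> 0"
      and rel: "(\<Sum>k\<le>card S. cscale (lam k) ((dmod_Phi q A ^^ k) m)) = 0"
      using dep[OF S(1), of "dmod_Phi q A" m] S(2) unfolding cspan_span by blast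
    have rel': "(\<Sum>k\<le>card S. (lam k * (q^n)^k) *s (((*v) A ^^ k) (cv m (int n)))) = 0" for n
    proof -
      have "cv (\<Sum>k\<le>card S. cscale (lam k) ((dmod_Phi q A ^^ k) m)) (int n) = 0"
        using rel by (simp add: cv_zero)
      then show ?thesis by (simp add: cv_sum cv_cscale cv_Phi_pow)
    qed
    obtain N where N: "\<And>n. n \<ge> N \<Longrightarrow> cv m (int n) = 0"
      using key[of A q k0 "card S" lam "\<lambda>n. cv m (int n)", OF assms(3) q0 assms(2) k0] rel' by blast
    show "m \<in> LP" unfolding LP_def fls_laurent_poly_def
    proof (intro CollectI allI)
      fix i show "\<exists>N'. \<forall>n\<ge>N'. fls_nth (m$i) n = 0"
      proof (intro exI[of _ "int N"] allI impI)
        fix n :: int assume n: "n \<ge> int N"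
        then have "cv m (int (nat n)) = 0" by (intro N) auto
        then have "cv m (int (nat n)) $ i = 0" by simp
        then show "fls_nth (m$i) n = 0" using n by (simp add: cv_def)
      qed
    qed
  qed
  have sup: "LP \<subseteq> M_global q A"
  proof
    fix m assume "m \<in> LP"
    then have "\<forall>i. \<exists>N. \<forall>n\<ge>N. fls_nth (m$i) n = 0" by (simp add: LP_def fls_laurent_poly_def)
    then obtain Nf where Nf: "\<And>i n. n \<ge> Nf i \<Longrightarrow> fls_nth (m$i) n = 0" by metis
    define N where "N = Max (range Nf)"
    define L where "L = Min (range (\<lambda>i. fls_subdegree (m$i)))"
    have hi: "fls_nth (m$i) n = 0" if "n \<ge> N" for i n
    proof -
      have "Nf i \<le> N" unfolding N_def by (rule Max_ge) auto
      then show ?thesis using that Nf by simp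
    qed
    have lo: "fls_nth (m$i) n = 0" if "n < L" for i n
    proof -
      have "L \<le> fls_subdegree (m$i)" unfolding L_def by (rule Min_le) auto
      then show ?thesis using that nth_less_subdegree_zero by simp
    qed
    have cvz: "cv m n = 0" if "n \<notin> {L..<N}" for n
      using that hi lo by (auto simp: cv_def vec_eq_iff not_less)
    have conv: "fls_convergent (m$i)" for i
    proof -
      have "conv_radius (fps_nth (fls_regpart (m$i))) = conv_radius (\<lambda>_. 0::complex)"
      proof (rule conv_radius_cong')
        show "eventually (\<lambda>n. fps_nth (fls_regpart (m$i)) n = 0) sequentially"
          unfolding eventually_sequentially
          by (intro exI[of _ "nat N"]) (auto intro!: hi)
      qed
      then show ?thesis by (simp add: fls_convergent_def fps_conv_radius_def)
    qed
    have "(dmod_Phi q A ^^ k) m \<in> cspan ((\<lambda>(j,n). (\<chi> i. if i = j then fls_shift (-n) 1 else 0) :: complex fls^'n) ` (UNIV \<times> {L..<N}))" for k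
      unfolding cspan_span
    proof (rule span_of_support)
      fix n :: int assume "n \<notin> {L..<N}"
      then have "cv m n = 0" by (rule cvz)
      then show "cv ((dmod_Phi q A ^^ k) m) n = 0"
        by (simp only: cv_Phi_pow pow_zero_vec vector_smult_rzero)
    qed
    then show "m \<in> M_global q A" unfolding M_global_def using conv
      by (intro CollectI conjI allI exI[of _ "(\<lambda>(j,n). (\<chi> i. if i = j then fls_shift (-n) 1 else 0) :: complex fls^'n) ` (UNIV \<times> {L..<N})"]) auto
  qed
  have P1: "M_global q A = LP" using sub sup by blast
  have P2: "(\<chi> i. if i = j then 1 else 0) \<in> M_global q A" for j
  proof -
    have "fls_laurent_poly (if i = j then 1 else 0)" for i
      unfolding fls_laurent_poly_def by (intro exI[of _ 1]) auto
    then show ?thesis unfolding P1 LP_def by simp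
  qed
  have P3: "\<exists>!c. (\<forall>j. fls_convergent (c j)) \<and>
               m = (\<Sum>j\<in>UNIV. (\<chi> i. c j * (if i = j then 1 else 0)))"
    if "\<forall>i. fls_convergent (m $ i)" for m :: "complex fls^'n"
  proof -
    have comp: "(\<Sum>j\<in>UNIV. (\<chi> i. c j * (if i = j then 1 else 0))) $ i = c i" for c :: "'n \<Rightarrow> complex fls" and i
      by (simp add: if_distrib cong: if_cong)
    show ?thesis
    proof (rule ex1I[of _ "\<lambda>j. m $ j"])
      show "(\<forall>j. fls_convergent (m $ j)) \<and> m = (\<Sum>j\<in>UNIV. (\<chi> i. m $ j * (if i = j then 1 else 0)))"
        using that comp[of "\<lambda>j. m $ j"] by (simp add: vec_eq_iff)
    next
      fix c assume "(\<forall>j. fls_convergent (c j)) \<and> m = (\<Sum>j\<in>UNIV. (\<chi> i. c j * (if i = j then 1 else 0)))"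
      then have "m $ i = c i" for i using comp[of c i] by simp
      then show "c = (\<lambda>j. m $ j)" by auto
    qed
  qed
  show ?thesis using P1 P2 P3 unfolding LP_def by blast
qed

end
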